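(* Let $V$ be a vertex operator superalgebra, $g$ an automorphism of $V$ of finite order, $T'$ the order of $\sigma g$, and let $n\in\frac{1}{T'}\mathbb{Z}_{\ge 0}$ with $\ell=\lfloor n\rfloor$. Then $A_{g,n}(V)$ is a quotient algebra of $A_{\sigma,\ell}(V^{\langle\sigma g\rangle})$, where $\langle\sigma g\rangle$ is the cyclic group generated by $\sigma g$, $V^{\langle\sigma g\rangle}$ is the fixed-point vertex operator subsuperalgebra, and $\sigma$ is regarded as an automorphism of $V^{\langle\sigma g\rangle}$. More precisely, $V^{\langle\sigma g\rangle}=V^{0*}$, the identity map of $V^{0*}$ sends $O_{\sigma,\ell}(V^{\langle\sigma g\rangle})$ into $O_{g,n}(V)$, the products $*_{\sigma,\ell}$ and $*_{g,n}$ coincide on $V^{0*}$, and the induced map $A_{\sigma,\ell}(V^{\langle\sigma g\rangle})\to A_{g,n}(V)$ is a surjective algebra homomorphism.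
   Context: A vertex operator superalgebra $V=\bigoplus_{n\in\frac12\mathbb Z}V_n=V_{\bar0}\oplus V_{\bar1}$ has $V_{\bar0}=\bigoplus_{n\in\mathbb Z}V_n$, $V_{\bar1}=\bigoplus_{n\in\frac12+\mathbb Z}V_n$; its canonical automorphism $\sigma$ acts as $(-1)^i$ on $V_{\bar i}$. Write $Y(v,z)=\sum v_nz^{-n-1}$, $Y(\omega,z)=\sum L(n)z^{-n-2}$. For $g$ of finite order with $T'=o(\sigma g)$, let $V^{r*}=\{v\in V:\sigma g v=e^{-2\pi i r/T'}v\}$ for $0\le r\le T'-1$. Write $n=\ell+\frac{i}{T'}$ with $\ell,i\in\mathbb Z_{\ge0}$, $0\le i\le T'-1$; for $0\le r\le T'-1$ set $\delta_i(r)=1$ if $r\le i$, $\delta_i(r)=0$ if $i<r\le T'-1$, and $\delta_i(T')=0$. For $v\in V$ and homogeneous $u\in V^{r*}$ define $u\circ_{g,n}v=\mathrm{Res}_z Y(u,z)v\,\frac{(1+z)^{\mathrm{wt}\,u-1+\delta_i(r)+\ell+r/T'}}{z^{2\ell+\delta_i(r)+\delta_i(T'-r)+1}}$, and $u*_{g,n}v=\sum_{m=0}^{\ell}(-1)^m\binom{m+\ell}{\ell}\mathrm{Res}_zY(u,z)v\frac{(1+z)^{\mathrm{wt}\,u+\ell}}{z^{\ell+m+1}}$ if $r=0$, and $u*_{g,n}v=0$ if $r>0$; extend bilinearly. $O_{g,n}(V)$ is the span of all $u\circ_{g,n}v$ and $L(-1)u+L(0)u$ ($u,v\in V$), and $A_{g,n}(V)=V/O_{g,n}(V)$,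 which is known to be an associative algebra under the product induced by $*_{g,n}$. For a vertex operator superalgebra $U$ with automorphism $\sigma$ (so $\sigma\cdot\sigma=1$, $T'=1$), $A_{\sigma,\ell}(U)$ is defined by the same recipe; in particular $O_{\sigma,\ell}(U)$ is spanned by $\mathrm{Res}_zY(u,z)v\frac{(1+z)^{\mathrm{wt}\,u+\ell}}{z^{2\ell+2}}$ and $(L(-1)+L(0))u$. *)

theory Defs
  imports Complex_Main
begin

text \<open>The underlying space of V is the whole type 'v (an additive group), with a
complex scalar multiplication.  md u m v is the mode u_m v of Y(u,z)=sum u_m z^(-m-1).
gr w is the weight space V_w (w real; nonzero only for w in (1/2)Z).\<close>

record 'v vosa =
  scal :: "complex \<Rightarrow> 'v \<Rightarrow> 'v"
  md   :: "'v \<Rightarrow> int \<Rightarrow> 'v \<Rightarrow> 'v"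
  vac  :: 'v
  cv   :: 'v
  gr   :: "real \<Rightarrow> 'v set"
  cc   :: complex

text \<open>Sum of a finitely supported sequence (all sums occurring below are finite
by the truncation axiom).\<close>
definition fsum :: "(nat \<Rightarrow> 'v::comm_monoid_add) \<Rightarrow> 'v" where
  "fsum f = sum f {i. f i \<noteq> 0}"

definition is_decomp :: "('v::ab_group_add, 'x) vosa_scheme \<Rightarrow> 'v \<Rightarrow> (real \<Rightarrow> 'v) \<Rightarrow> bool" where
  "is_decomp V v c \<longleftrightarrow> finite {w. c w \<noteq> 0} \<and> (\<forall>w. c w \<in> gr V w) \<and> v = sum c {w. c w \<noteq> 0}"

definition comp :: "('v::ab_group_add, 'x) vosa_scheme \<Rightarrow> real \<Rightarrow> 'v \<Rightarrow> 'v" where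
  "comp V w v = (THE c. is_decomp V v c) w"

definition supp :: "('v::ab_group_add, 'x) vosa_scheme \<Rightarrow> 'v \<Rightarrow> real set" where
  "supp V v = {w. comp V w v \<noteq> 0}"

text \<open>Virasoro operators L(m) = omega_(m+1)\<close>
definition Lop :: "('v::ab_group_add, 'x) vosa_scheme \<Rightarrow> int \<Rightarrow> 'v \<Rightarrow> 'v" where
  "Lop V m v = md V (cv V) (m + 1) v"

text \<open>parity sign (-1)^(|u||v|) for u in V_a, v in V_b\<close>
definition psign :: "real \<Rightarrow> real \<Rightarrow> complex" where
  "psign a b = (if a \<notin> \<int> \<and> b \<notin> \<int> then -1 else 1)"

definition is_vosa :: "('v::ab_group_add, 'x) vosa_scheme \<Rightarrow> bool" where
  "is_vosa V \<longleftrightarrow>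
     vector_space (scal V) \<and>
     (\<forall>w. module.subspace (scal V) (gr V w)) \<and>
     (\<forall>w. (\<forall>k::int. w \<noteq> real_of_int k / 2) \<longrightarrow> gr V w = {0}) \<and>
     (\<forall>v. \<exists>!c. is_decomp V v c) \<and>
     (\<forall>w. \<exists>B. finite B \<and> module.span (scal V) B = gr V w) \<and>
     (\<exists>N. \<forall>w<N. gr V w = {0}) \<and>
     (\<forall>u m. Vector_Spaces.linear (scal V) (scal V) (md V u m)) \<and>
     (\<forall>v m. Vector_Spaces.linear (scal V) (scal V) (\<lambda>u. md V u m v)) \<and>
     (\<forall>u v. \<exists>N. \<forall>m\<ge>N. md V u m v = 0) \<and>
     (\<forall>a b u v m. u \<in> gr V a \<longrightarrow> v \<in> gr V b \<longrightarrow> md V u m v \<in> gr V (a + b - of_int m - 1)) \<and>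
     vac V \<in> gr V 0 \<and>
     (\<forall>m v. md V (vac V) m v = (if m = -1 then v else 0)) \<and>
     (\<forall>u m. m \<ge> 0 \<longrightarrow> md V u m (vac V) = 0) \<and>
     (\<forall>u. md V u (-1) (vac V) = u) \<and>
     (\<forall>a b u v w p q r. u \<in> gr V a \<longrightarrow> v \<in> gr V b \<longrightarrow>
        fsum (\<lambda>i. scal V (of_int p gchoose i) (md V (md V u (r + int i) v) (p + q - int i) w))
        = fsum (\<lambda>i. scal V ((-1)^i * (of_int r gchoose i))
             (md V u (p + r - int i) (md V v (q + int i) w)
              - scal V ((-1) powi r * psign a b) (md V v (q + r - int i) (md V u (p + int i) w))))) \<and>
     cv V \<in> gr V 2 \<and>
     (\<forall>m n v. Lop V m (Lop V n v) - Lop V n (Lop V m v)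
        = scal V (of_int (m - n)) (Lop V (m + n) v)
          + scal V (if m + n = 0 then (of_int (m^3 - m) / 12) * cc V else 0) v) \<and>
     (\<forall>w v. v \<in> gr V w \<longrightarrow> Lop V 0 v = scal V (of_real w) v) \<and>
     (\<forall>u m v. md V (Lop V (-1) u) m v = scal V (- of_int m) (md V u (m - 1) v))"

definition is_aut :: "('v::ab_group_add, 'x) vosa_scheme \<Rightarrow> ('v \<Rightarrow> 'v) \<Rightarrow> bool" where
  "is_aut V g \<longleftrightarrow> bij g \<and> Vector_Spaces.linear (scal V) (scal V) g \<and>
     (\<forall>u m v. g (md V u m v) = md V (g u) m (g v)) \<and> g (vac V) = vac V \<and> g (cv V) = cv V"

definition sigma :: "('v::ab_group_add, 'x) vosa_scheme \<Rightarrow> 'v \<Rightarrow> 'v" where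
  "sigma V v = (\<Sum>w\<in>supp V v. if w \<in> \<int> then comp V w v else - comp V w v)"

definition ordS :: "'v set \<Rightarrow> ('v \<Rightarrow> 'v) \<Rightarrow> nat" where
  "ordS S h = (LEAST k. 0 < k \<and> (\<forall>v\<in>S. (h ^^ k) v = v))"

text \<open>S^{r*} w.r.t. the operator h (playing the role of sigma g) of order T\<close>
definition eigS :: "('v::ab_group_add, 'x) vosa_scheme \<Rightarrow> 'v set \<Rightarrow> ('v \<Rightarrow> 'v) \<Rightarrow> nat \<Rightarrow> 'v set" where
  "eigS V S h r = {v \<in> S. h v = scal V (exp (- 2 * of_real pi * \<i> * of_nat r / of_nat (ordS S h))) v}"

definition proj0 :: "('v::ab_group_add, 'x) vosa_scheme \<Rightarrow> 'v set \<Rightarrow> ('v \<Rightarrow> 'v) \<Rightarrow> 'v \<Rightarrow> 'v" where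
  "proj0 V S h v = scal V (1 / of_nat (ordS S h)) (\<Sum>k<ordS S h. (h ^^ k) v)"

text \<open>Res_z Y(u,z) v (1+z)^alpha / z^b = sum_j (alpha choose j) u_{j-b} v\<close>
definition res :: "('v::ab_group_add, 'x) vosa_scheme \<Rightarrow> 'v \<Rightarrow> 'v \<Rightarrow> complex \<Rightarrow> nat \<Rightarrow> 'v" where
  "res V u v \<alpha> b = fsum (\<lambda>j. scal V (\<alpha> gchoose j) (md V u (int j - int b) v))"

definition dlt :: "nat \<Rightarrow> nat \<Rightarrow> nat" where
  "dlt i r = (if r \<le> i then 1 else 0)"

definition lev :: "real \<Rightarrow> nat" where
  "lev n = nat \<lfloor>n\<rfloor>"

definition frc :: "nat \<Rightarrow> real \<Rightarrow> nat" where
  "frc T n = nat \<lfloor>(n - real (lev n)) * real T\<rfloor>"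

text \<open>u o_{g,n} v for u of weight w in S^{r*}, T = o(sigma g)\<close>
definition circ :: "('v::ab_group_add, 'x) vosa_scheme \<Rightarrow> nat \<Rightarrow> real \<Rightarrow> nat \<Rightarrow> real \<Rightarrow> 'v \<Rightarrow> 'v \<Rightarrow> 'v" where
  "circ V T n r w u v =
     (let l = lev n; i = frc T n in
      res V u v (of_real (w - 1 + real (dlt i r) + real l + real r / real T))
        (2 * l + dlt i r + dlt i (T - r) + 1))"

definition Ogn :: "('v::ab_group_add, 'x) vosa_scheme \<Rightarrow> 'v set \<Rightarrow> ('v \<Rightarrow> 'v) \<Rightarrow> real \<Rightarrow> 'v set" where
  "Ogn V S h n = module.span (scal V)
     ({circ V (ordS S h) n r w u v | r w u v.
         r < ordS S h \<and> u \<in> gr V w \<and> u \<in> eigS V S h r \<and> v \<in> S}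
      \<union> {Lop V (-1) u + Lop V 0 u | u. u \<in> S})"

text \<open>u *_{g,n} v for u of weight w in S^{0*}\<close>
definition star_hom :: "('v::ab_group_add, 'x) vosa_scheme \<Rightarrow> real \<Rightarrow> real \<Rightarrow> 'v \<Rightarrow> 'v \<Rightarrow> 'v" where
  "star_hom V n w u v = (let l = lev n in
     (\<Sum>m\<le>l. scal V ((-1)^m * of_nat ((m + l) choose l))
        (res V u v (of_real (w + real l)) (l + m + 1))))"

text \<open>bilinear extension: components in S^{r*} with r > 0 contribute 0\<close>
definition star :: "('v::ab_group_add, 'x) vosa_scheme \<Rightarrow> 'v set \<Rightarrow> ('v \<Rightarrow> 'v) \<Rightarrow> real \<Rightarrow> 'v \<Rightarrow> 'v \<Rightarrow> 'v" where
  "star V S h n u v = (\<Sum>w\<in>supp V u. star_hom V n w (proj0 V S h (comp V w u)) v)"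

definition fixpts :: "('v \<Rightarrow> 'v) \<Rightarrow> 'v set" where
  "fixpts h = {v. \<forall>k. (h ^^ k) v = v}"

end

theory Submission imports Defs "HOL-Computational_Algebra.Formal_Power_Series" "HOL-Analysis.Complex_Transcendental" begin


locale vctx = fixes V :: "('v::ab_group_add) vosa" assumes vosa: "is_vosa V"
begin

lemmas ax = vosa[unfolded is_vosa_def]
lemmas vsp = ax[THEN conjunct1]
lemmas ax_sub = ax[THEN conjunct2, THEN conjunct1]
lemmas ax_uniq = ax[THEN conjunct2, THEN conjunct2, THEN conjunct2, THEN conjunct1]
lemmas ax_mdlin = ax[THEN conjunct2, THEN conjunct2, THEN conjunct2, THEN conjunct2, THEN conjunct2, THEN conjunct2, THEN conjunct1]
lemmas ax_grmd = ax[THEN conjunct2, THEN conjunct2, THEN conjunct2, THEN conjunct2, THEN conjunct2, THEN conjunct2, THEN conjunct2, THEN conjunct2, THEN conjunct2, THEN conjunct1]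
lemmas ax_vac = ax[THEN conjunct2, THEN conjunct2, THEN conjunct2, THEN conjunct2, THEN conjunct2, THEN conjunct2, THEN conjunct2, THEN conjunct2, THEN conjunct2, THEN conjunct2, THEN conjunct1]
lemmas ax_modevac = ax[THEN conjunct2, THEN conjunct2, THEN conjunct2, THEN conjunct2, THEN conjunct2, THEN conjunct2, THEN conjunct2, THEN conjunct2, THEN conjunct2, THEN conjunct2, THEN conjunct2, THEN conjunct2, THEN conjunct1]
lemmas ax_vacm1 = ax[THEN conjunct2, THEN conjunct2, THEN conjunct2, THEN conjunct2, THEN conjunct2, THEN conjunct2, THEN conjunct2, THEN conjunct2, THEN conjunct2, THEN conjunct2, THEN conjunct2, THEN conjunct2, THEN conjunct2, THEN conjunct1]
lemmas ax_cv = ax[THEN conjunct2, THEN conjunct2, THEN conjunct2, THEN conjunct2, THEN conjunct2, THEN conjunct2, THEN conjunct2, THEN conjunct2, THEN conjunct2, THEN conjunct2, THEN conjunct2, THEN conjunct2, THEN conjunct2, THEN conjunct2, THEN conjunct2, THEN conjunct1]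
lemmas ax_L0 = ax[THEN conjunct2, THEN conjunct2, THEN conjunct2, THEN conjunct2, THEN conjunct2, THEN conjunct2, THEN conjunct2, THEN conjunct2, THEN conjunct2, THEN conjunct2, THEN conjunct2, THEN conjunct2, THEN conjunct2, THEN conjunct2, THEN conjunct2, THEN conjunct2, THEN conjunct2, THEN conjunct1]
lemmas ax_Lm1 = ax[THEN conjunct2, THEN conjunct2, THEN conjunct2, THEN conjunct2, THEN conjunct2, THEN conjunct2, THEN conjunct2, THEN conjunct2, THEN conjunct2, THEN conjunct2, THEN conjunct2, THEN conjunct2, THEN conjunct2, THEN conjunct2, THEN conjunct2, THEN conjunct2, THEN conjunct2, THEN conjunct2]
sublocale vs: vector_space "scal V" by (rule vsp)

lemma grsub: "vs.subspace (gr V w)" using ax_sub by blast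
lemma gr0: "0 \<in> gr V w" using grsub vs.subspace_0 by blast
lemma gradd: "x \<in> gr V w \<Longrightarrow> y \<in> gr V w \<Longrightarrow> x + y \<in> gr V w" using grsub vs.subspace_add by blast
lemma grscal: "x \<in> gr V w \<Longrightarrow> scal V c x \<in> gr V w" using grsub vs.subspace_scale by blast
lemma grneg: "x \<in> gr V w \<Longrightarrow> - x \<in> gr V w" using grsub vs.subspace_neg by blast
lemma grsum: "(\<And>i. i \<in> A \<Longrightarrow> f i \<in> gr V w) \<Longrightarrow> sum f A \<in> gr V w" using grsub vs.subspace_sum by blast

lemma uniq: "\<exists>!c. is_decomp V v c" using ax_uniq by blast

lemma md_lin: "Vector_Spaces.linear (scal V) (scal V) (md V u m)"
  using ax_mdlin by blast
lemmas md_hom = Vector_Spaces.linear.axioms(3)[OF md_lin]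
lemma md_add: "md V u m (x + y) = md V u m x + md V u m y" using md_hom module_hom.add by blast
lemma md_scal: "md V u m (scal V c x) = scal V c (md V u m x)" using md_hom module_hom.scale by blast
lemma md_sum: "md V u m (sum f A) = (\<Sum>a\<in>A. md V u m (f a))" using md_hom module_hom.sum by blast
lemma md_diff: "md V u m (x - y) = md V u m x - md V u m y" using md_hom module_hom.diff by blast

lemma decomp_unique:
  assumes "finite F" "\<And>w. w \<in> F \<Longrightarrow> x w \<in> gr V w" "v = sum x F"
  shows "comp V w v = (if w \<in> F then x w else 0)"
proof -
  define c where "c = (\<lambda>w. if w \<in> F then x w else 0)"
  have fin: "finite {w. c w \<noteq> 0}" by (rule finite_subset[OF _ assms(1)]) (auto simp: c_def)
  have "v = sum c F" using assms(3) by (simp add: c_def)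
  also have "\<dots> = sum c {w. c w \<noteq> 0}"
    by (rule sum.mono_neutral_right[OF assms(1)]) (auto simp: c_def split: if_splits)
  finally have "is_decomp V v c" unfolding is_decomp_def using fin assms(2) gr0 by (auto simp: c_def)
  hence "(THE c. is_decomp V v c) = c" by (rule the1_equality[OF uniq[of v]])
  thus ?thesis unfolding comp_def c_def by simp
qed

lemma comp_decomp: "is_decomp V v (\<lambda>w. comp V w v)"
  unfolding comp_def using theI'[OF uniq] by (simp add: eta_contract_eq)

lemma comp_gr: "comp V w v \<in> gr V w" using comp_decomp unfolding is_decomp_def by blast
lemma supp_fin: "finite (supp V v)" using comp_decomp unfolding is_decomp_def supp_def by blast
lemma comp_sum: "v = (\<Sum>w\<in>supp V v. comp V w v)" using comp_decomp unfolding is_decomp_def supp_def by blast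
lemma comp_sum_sup: "finite F \<Longrightarrow> supp V v \<subseteq> F \<Longrightarrow> v = (\<Sum>w\<in>F. comp V w v)"
  apply (subst comp_sum) apply (rule sum.mono_neutral_left) by (auto simp: supp_def)

lemma comp_hom: "x \<in> gr V w \<Longrightarrow> comp V w' x = (if w' = w then x else 0)"
  using decomp_unique[of "{w}" "\<lambda>_. x" x w'] by simp

lemma comp_zero: "comp V w 0 = 0" using comp_hom[OF gr0] by simp

lemma comp_add: "comp V w (a + b) = comp V w a + comp V w b"
proof -
  let ?F = "supp V a \<union> supp V b"
  have f: "finite ?F" using supp_fin by auto
  have "a + b = (\<Sum>w\<in>?F. comp V w a + comp V w b)"
    using comp_sum_sup[OF f Un_upper1] comp_sum_sup[OF f Un_upper2] by (simp only: sum.distrib)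
  from decomp_unique[OF f _ this, of w] have "comp V w (a + b) = (if w \<in> ?F then comp V w a + comp V w b else 0)"
    using comp_gr gradd by blast
  thus ?thesis by (auto simp: supp_def split: if_splits)
qed

lemma comp_scal: "comp V w (scal V c a) = scal V c (comp V w a)"
proof -
  let ?F = "supp V a"
  have f: "finite ?F" using supp_fin by auto
  have "scal V c a = (\<Sum>w\<in>?F. scal V c (comp V w a))"
    using comp_sum_sup[OF f subset_refl] vs.scale_sum_right by metis
  from decomp_unique[OF f _ this, of w] have "comp V w (scal V c a) = (if w \<in> ?F then scal V c (comp V w a) else 0)"
    using comp_gr grscal by blast
  thus ?thesis by (auto simp: supp_def split: if_splits)
qed

lemma comp_neg: "comp V w (- a) = - comp V w a"
  by (metis add_eq_0_iff comp_add comp_zero)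

lemma comp_sumf: "comp V w (sum f A) = (\<Sum>a\<in>A. comp V w (f a))"
  by (induct A rule: infinite_finite_induct) (auto simp: comp_zero comp_add)


lemma Lop_add: "Lop V m (x + y) = Lop V m x + Lop V m y" unfolding Lop_def by (rule md_add)
lemma Lop_scal: "Lop V m (scal V c x) = scal V c (Lop V m x)" unfolding Lop_def by (rule md_scal)
lemma Lop_sum: "Lop V m (sum f A) = (\<Sum>a\<in>A. Lop V m (f a))" unfolding Lop_def by (rule md_sum)
lemma L0_gr: "x \<in> gr V w \<Longrightarrow> Lop V 0 x = scal V (of_real w) x" using ax_L0 by blast

lemma scal_eq0: "scal V c x = 0 \<Longrightarrow> c \<noteq> 0 \<Longrightarrow> x = 0" by simp

lemma L0_eigen_gr:
  assumes "Lop V 0 y = scal V (of_real w) y"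
  shows "y \<in> gr V w"
proof -
  let ?F = "supp V y"
  have f: "finite ?F" by (rule supp_fin)
  have ey: "y = (\<Sum>w'\<in>?F. comp V w' y)" by (rule comp_sum)
  have "Lop V 0 y = (\<Sum>w'\<in>?F. scal V (of_real w') (comp V w' y))"
    by (subst ey, simp only: Lop_sum, rule sum.cong[OF refl], rule L0_gr[OF comp_gr])
  moreover have "scal V (of_real w) y = (\<Sum>w'\<in>?F. scal V (of_real w) (comp V w' y))"
    by (subst ey) (simp add: vs.scale_sum_right)
  ultimately have "0 = (\<Sum>w'\<in>?F. scal V (of_real w') (comp V w' y) - scal V (of_real w) (comp V w' y))"
    using assms by (simp add: sum_subtractf)
  also have "\<dots> = (\<Sum>w'\<in>?F. scal V (of_real w' - of_real w) (comp V w' y))"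
    by (simp add: vs.scale_left_diff_distrib)
  finally have z: "0 = (\<Sum>w'\<in>?F. scal V (of_real w' - of_real w) (comp V w' y))" .
  have "\<And>w'. w' \<in> ?F \<Longrightarrow> scal V (of_real w' - of_real w) (comp V w' y) \<in> gr V w'"
    using grscal comp_gr by blast
  from decomp_unique[OF f this z] have c0: "\<And>w'. w' \<in> ?F \<Longrightarrow> scal V (of_real w' - of_real w) (comp V w' y) = 0"
    by (metis comp_zero)
  have "\<And>w'. w' \<in> ?F \<Longrightarrow> comp V w' y \<in> gr V w"
  proof -
    fix w' assume "w' \<in> ?F"
    show "comp V w' y \<in> gr V w"
    proof (cases "w' = w")
      case True thus ?thesis using comp_gr by simp
    next
      case False
      hence "(of_real w' - of_real w :: complex) \<noteq> 0" by simp
      with c0[OF \<open>w' \<in> ?F\<close>] have "comp V w' y = 0" by simp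
      thus ?thesis using gr0 by simp
    qed
  qed
  hence "(\<Sum>w'\<in>?F. comp V w' y) \<in> gr V w" by (rule grsum)
  with ey show ?thesis by simp
qed

definition eps :: "real \<Rightarrow> 'v \<Rightarrow> 'v" where "eps w x = (if w \<in> \<int> then x else - x)"

lemma eps_gr: "x \<in> gr V w \<Longrightarrow> eps w x \<in> gr V w" unfolding eps_def using grneg by auto
lemma eps_add: "eps w (x + y) = eps w x + eps w y" unfolding eps_def by auto
lemma eps_zero: "eps w 0 = 0" unfolding eps_def by auto
lemma eps_eps: "eps w (eps w x) = x" unfolding eps_def by auto
lemma eps_scal: "eps w (scal V c x) = scal V c (eps w x)" unfolding eps_def by auto
lemma eps_eq0: "eps w x = 0 \<longleftrightarrow> x = 0" unfolding eps_def by auto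

lemma sigma_sup: "finite F \<Longrightarrow> supp V v \<subseteq> F \<Longrightarrow> sigma V v = (\<Sum>w\<in>F. eps w (comp V w v))"
  unfolding sigma_def eps_def[symmetric]
  by (rule sum.mono_neutral_left) (auto simp: supp_def eps_zero)

lemma comp_sigma: "comp V w (sigma V v) = eps w (comp V w v)"
proof -
  have "sigma V v = (\<Sum>w\<in>supp V v. eps w (comp V w v))" by (rule sigma_sup[OF supp_fin subset_refl])
  from decomp_unique[OF supp_fin _ this] eps_gr comp_gr
  have "comp V w (sigma V v) = (if w \<in> supp V v then eps w (comp V w v) else 0)" by blast
  thus ?thesis by (auto simp: supp_def eps_zero)
qed

lemma supp_sigma: "supp V (sigma V v) = supp V v" unfolding supp_def comp_sigma eps_eq0 ..

lemma sigma_hom: assumes "x \<in> gr V w" shows "sigma V x = eps w x"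
proof -
  have "supp V x \<subseteq> {w}" unfolding supp_def using comp_hom[OF assms] by auto
  from sigma_sup[OF _ this] show ?thesis using comp_hom[OF assms] by simp
qed

lemma sigma_sigma: "sigma V (sigma V v) = v"
proof -
  have "sigma V (sigma V v) = (\<Sum>w\<in>supp V v. eps w (comp V w (sigma V v)))"
    by (rule sigma_sup[OF supp_fin]) (simp add: supp_sigma)
  also have "\<dots> = (\<Sum>w\<in>supp V v. comp V w v)" by (simp add: comp_sigma eps_eps)
  also have "\<dots> = v" by (rule comp_sum[symmetric])
  finally show ?thesis .
qed

lemma supp_add: "supp V (a + b) \<subseteq> supp V a \<union> supp V b"
  unfolding supp_def comp_add by auto

lemma sigma_add: "sigma V (a + b) = sigma V a + sigma V b"
proof -
  let ?F = "supp V a \<union> supp V b"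
  have f: "finite ?F" using supp_fin by auto
  have "sigma V (a + b) = (\<Sum>w\<in>?F. eps w (comp V w (a + b)))" by (rule sigma_sup[OF f supp_add])
  also have "\<dots> = (\<Sum>w\<in>?F. eps w (comp V w a)) + (\<Sum>w\<in>?F. eps w (comp V w b))"
    by (simp add: comp_add eps_add sum.distrib)
  also have "\<dots> = sigma V a + sigma V b"
    using sigma_sup[OF f Un_upper1] sigma_sup[OF f Un_upper2] by metis
  finally show ?thesis .
qed

lemma sigma_scal: "sigma V (scal V c a) = scal V c (sigma V a)"
proof -
  let ?F = "supp V a"
  have f: "finite ?F" using supp_fin by auto
  have s: "supp V (scal V c a) \<subseteq> ?F" unfolding supp_def comp_scal by auto
  have "sigma V (scal V c a) = (\<Sum>w\<in>?F. eps w (comp V w (scal V c a)))" by (rule sigma_sup[OF f s])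
  also have "\<dots> = scal V c (\<Sum>w\<in>?F. eps w (comp V w a))"
    by (simp add: comp_scal eps_scal vs.scale_sum_right)
  also have "\<dots> = scal V c (sigma V a)"
    using sigma_sup[OF f subset_refl] by metis
  finally show ?thesis .
qed

lemma sigma_zero: "sigma V 0 = 0" by (metis add_cancel_right_right sigma_add)

end

locale gctx = vctx V for V :: "('v::ab_group_add) vosa" +
  fixes g :: "'v \<Rightarrow> 'v"
  assumes aut: "is_aut V g" and fin: "\<exists>k>0. g ^^ k = id"
begin

lemma g_hom: "module_hom (scal V) (scal V) g"
  using aut unfolding is_aut_def using Vector_Spaces.linear.axioms(3) by blast
lemma g_add: "g (x + y) = g x + g y" using g_hom module_hom.add by blast
lemma g_scal: "g (scal V c x) = scal V c (g x)" using g_hom module_hom.scale by blast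
lemma g_sum: "g (sum f A) = (\<Sum>a\<in>A. g (f a))" using g_hom module_hom.sum by blast
lemma g_zero: "g 0 = 0" using g_hom module_hom.zero by blast
lemma g_neg: "g (- x) = - g x" using g_hom module_hom.neg by blast
lemma g_md: "g (md V u m v) = md V (g u) m (g v)" using aut unfolding is_aut_def by blast
lemma g_cv: "g (cv V) = cv V" using aut unfolding is_aut_def by blast

lemma g_gr: assumes "x \<in> gr V w" shows "g x \<in> gr V w"
proof -
  have "Lop V 0 (g x) = g (Lop V 0 x)" unfolding Lop_def g_md g_cv ..
  also have "\<dots> = scal V (of_real w) (g x)" using L0_gr[OF assms] g_scal by simp
  finally show ?thesis by (rule L0_eigen_gr)
qed

lemma g_eps: "g (eps w x) = eps w (g x)" unfolding eps_def by (simp add: g_neg)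

definition h where "h = sigma V \<circ> g"

lemma h_gr: "x \<in> gr V w \<Longrightarrow> h x \<in> gr V w" unfolding h_def
  using g_gr sigma_hom eps_gr by (metis comp_apply)
lemma h_hom: "x \<in> gr V w \<Longrightarrow> h x = eps w (g x)" unfolding h_def using g_gr sigma_hom by simp
lemma h_add: "h (x + y) = h x + h y" unfolding h_def by (simp add: g_add sigma_add)
lemma h_scal: "h (scal V c x) = scal V c (h x)" unfolding h_def by (simp add: g_scal sigma_scal)
lemma h_zero: "h 0 = 0" unfolding h_def by (simp add: g_zero sigma_zero)

lemma hp_add: "(h ^^ k) (x + y) = (h ^^ k) x + (h ^^ k) y" by (induct k) (auto simp: h_add)
lemma hp_scal: "(h ^^ k) (scal V c x) = scal V c ((h ^^ k) x)" by (induct k) (auto simp: h_scal)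
lemma hp_zero: "(h ^^ k) 0 = 0" by (induct k) (auto simp: h_zero)
lemma hp_sum: "(h ^^ k) (sum f A) = (\<Sum>a\<in>A. (h ^^ k) (f a))"
  by (induct A rule: infinite_finite_induct) (auto simp: hp_zero hp_add)
lemma hp_gr: "x \<in> gr V w \<Longrightarrow> (h ^^ k) x \<in> gr V w" by (induct k) (auto simp: h_gr)

lemma gp_gr: "x \<in> gr V w \<Longrightarrow> (g ^^ k) x \<in> gr V w" by (induct k) (auto simp: g_gr)

lemma h2: "x \<in> gr V w \<Longrightarrow> (h ^^ (2 * m)) x = (g ^^ (2 * m)) x"
proof (induct m)
  case 0 thus ?case by simp
next
  case (Suc m)
  let ?y = "(g ^^ (2 * m)) x"
  have y: "?y \<in> gr V w" using gp_gr[OF Suc.prems] .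
  have "(h ^^ (2 * Suc m)) x = h (h ((h ^^ (2 * m)) x))" by (simp add: mult_2)
  also have "\<dots> = h (h ?y)" using Suc by simp
  also have "\<dots> = h (eps w (g ?y))" using h_hom y by simp
  also have "\<dots> = eps w (g (eps w (g ?y)))" using h_hom y g_gr eps_gr by blast
  also have "\<dots> = g (g ?y)" by (simp add: g_eps eps_eps)
  also have "\<dots> = (g ^^ (2 * Suc m)) x" by (simp add: mult_2)
  finally show ?case .
qed

lemma h_period: "\<exists>k>0. \<forall>v. (h ^^ k) v = v"
proof -
  obtain k where k: "k > 0" "g ^^ k = id" using fin by blast
  have gk: "g ^^ (2 * k) = id" using k(2) by (simp add: mult_2 funpow_add)
  have "\<forall>v. (h ^^ (2 * k)) v = v"
  proof
    fix v
    have "(h ^^ (2 * k)) v = (\<Sum>w\<in>supp V v. (h ^^ (2 * k)) (comp V w v))"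
      by (subst comp_sum) (rule hp_sum)
    also have "\<dots> = (\<Sum>w\<in>supp V v. comp V w v)" 
      by (rule sum.cong[OF refl]) (simp add: h2[OF comp_gr] gk)
    also have "\<dots> = v" by (rule comp_sum[symmetric])
    finally show "(h ^^ (2 * k)) v = v" .
  qed
  thus ?thesis using k(1) by (intro exI[of _ "2*k"]) auto
qed

definition T where "T = ordS UNIV h"

lemma T_pos: "T > 0" and hT: "(h ^^ T) v = v"
proof -
  have ex: "\<exists>k. 0 < k \<and> (\<forall>v\<in>UNIV. (h ^^ k) v = v)" using h_period by auto
  have "0 < T \<and> (\<forall>v\<in>UNIV. (h ^^ T) v = v)" unfolding T_def ordS_def by (rule LeastI_ex[OF ex])
  thus "T > 0" "(h ^^ T) v = v" by auto
qed

lemma h_comp: "h (comp V w v) = comp V w (h v)"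
proof -
  have "h (\<Sum>w\<in>supp V v. comp V w v) = (\<Sum>w\<in>supp V v. h (comp V w v))"
    using hp_sum[of 1] by simp
  hence "h v = (\<Sum>w\<in>supp V v. h (comp V w v))" using comp_sum[of v] by metis
  from decomp_unique[OF supp_fin _ this] h_gr comp_gr
  have "comp V w (h v) = (if w \<in> supp V v then h (comp V w v) else 0)" by blast
  thus ?thesis by (auto simp: supp_def h_zero)
qed

end


context gctx begin

lemma h_sum: "h (sum f A) = (\<Sum>a\<in>A. h (f a))" using hp_sum[of 1] by simp

definition zeta :: complex where "zeta = exp (2 * of_real pi * \<i> / of_nat T)"

lemma zeta_pow: "zeta ^ k = exp (of_nat k * (2 * of_real pi * \<i> / of_nat T))"
  unfolding zeta_def by (rule exp_of_nat_mult[symmetric])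

lemma zeta_T: "zeta ^ T = 1"
  unfolding zeta_pow using T_pos by simp

lemma zeta_nz: "zeta \<noteq> 0" unfolding zeta_def by simp

lemma eig_val: "exp (- 2 * of_real pi * \<i> * of_nat r / of_nat T) = inverse (zeta ^ r)"
proof -
  have "- 2 * of_real pi * \<i> * of_nat r / of_nat T = - (of_nat r * (2 * of_real pi * \<i> / of_nat T))"
    by simp
  thus ?thesis unfolding zeta_pow by (simp only: exp_minus)
qed

lemma zeta_ne1: assumes "0 < k" "k < T" shows "zeta ^ k \<noteq> 1"
proof
  assume "zeta ^ k = 1"
  hence "exp (of_nat k * (2 * of_real pi * \<i> / of_nat T)) = 1" unfolding zeta_pow .
  then obtain m :: int where m: "Im (of_nat k * (2 * of_real pi * \<i> / of_nat T)) = of_int (2 * m) * pi"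
    unfolding exp_eq_1 by blast
  have "real k * (2 * pi) / real T = of_int (2 * m) * pi" using m by simp
  hence "real k = real_of_int m * real T" using T_pos by (simp add: field_simps)
  hence "int k = m * int T" by (metis of_int_eq_iff of_int_mult of_int_of_nat_eq)
  moreover have "m * int T \<le> 0 \<or> int T \<le> m * int T"
  proof (cases "m \<le> 0")
    case True thus ?thesis by (simp add: mult_nonpos_nonneg)
  next
    case False hence "1 \<le> m" by simp
    hence "1 * int T \<le> m * int T" by (rule mult_right_mono) simp
    thus ?thesis by simp
  qed
  ultimately show False using assms by linarith
qed

definition P where "P r c = scal V (1 / of_nat T) (\<Sum>k<T. scal V (zeta ^ (r * k)) ((h ^^ k) c))"

lemma P_gr: "c \<in> gr V w \<Longrightarrow> P r c \<in> gr V w"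
  unfolding P_def by (intro grscal grsum hp_gr)

lemma P_eig: "h (P r c) = scal V (inverse (zeta ^ r)) (P r c)"
proof -
  define f where "f k = scal V (zeta ^ (r * k)) ((h ^^ k) c)" for k
  have f0: "f 0 = c" and fT: "f T = c" unfolding f_def
    by (simp_all add: hT mult.commute[of r] power_mult zeta_T)
  have "h (P r c) = scal V (1 / of_nat T) (\<Sum>k<T. scal V (zeta ^ (r * k)) ((h ^^ Suc k) c))"
    unfolding P_def h_scal h_sum by (simp add: h_scal)
  also have "(\<Sum>k<T. scal V (zeta ^ (r * k)) ((h ^^ Suc k) c)) = (\<Sum>k<T. scal V (inverse (zeta ^ r)) (f (Suc k)))"
    unfolding f_def using zeta_nz by (intro sum.cong) (simp_all add: power_add field_simps)
  also have "\<dots> = scal V (inverse (zeta ^ r)) (\<Sum>k<T. f (Suc k))" by (simp add: vs.scale_sum_right)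
  also have "(\<Sum>k<T. f (Suc k)) = (\<Sum>k<T. f k)"
  proof -
    have "(\<Sum>k<Suc T. f k) = f 0 + (\<Sum>k<T. f (Suc k))" by (rule sum.lessThan_Suc_shift)
    moreover have "(\<Sum>k<Suc T. f k) = (\<Sum>k<T. f k) + f T" by simp
    ultimately show ?thesis using f0 fT by (simp add: add.commute)
  qed
  finally show ?thesis unfolding P_def f_def by (simp add: mult.commute)
qed

lemma P_sum: "(\<Sum>r<T. P r c) = c"
proof -
  have "(\<Sum>r<T. P r c) = scal V (1 / of_nat T) (\<Sum>r<T. \<Sum>k<T. scal V (zeta ^ (r * k)) ((h ^^ k) c))"
    unfolding P_def by (simp add: vs.scale_sum_right)
  also have "(\<Sum>r<T. \<Sum>k<T. scal V (zeta ^ (r * k)) ((h ^^ k) c)) = (\<Sum>k<T. scal V (\<Sum>r<T. zeta ^ (r * k)) ((h ^^ k) c))"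
    by (subst sum.swap) (simp add: vs.scale_sum_left)
  also have "\<dots> = (\<Sum>k<T. if k = 0 then scal V (of_nat T) c else 0)"
  proof (intro sum.cong refl)
    fix k assume k: "k \<in> {..<T}"
    have e: "(\<Sum>r<T. zeta ^ (r * k)) = (\<Sum>r<T. (zeta ^ k) ^ r)"
      by (intro sum.cong refl) (metis power_mult mult.commute)
    show "scal V (\<Sum>r<T. zeta ^ (r * k)) ((h ^^ k) c) = (if k = 0 then scal V (of_nat T) c else 0)"
    proof (cases "k = 0")
      case True thus ?thesis by simp
    next
      case False
      have "zeta ^ k \<noteq> 1" using zeta_ne1 False k by auto
      moreover have "(zeta ^ k) ^ T = 1" by (metis power_mult mult.commute zeta_T power_one)
      ultimately have "(\<Sum>r<T. zeta ^ (r * k)) = 0" unfolding e sum_gp_strict by simp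
      thus ?thesis using False by simp
    qed
  qed
  also have "\<dots> = scal V (of_nat T) c" using T_pos by (simp add: sum.delta)
  finally show ?thesis using T_pos by simp
qed

end


context gctx begin

lemma O_L: "Lop V (-1) u + Lop V 0 u \<in> Ogn V UNIV h n"
  unfolding Ogn_def by (rule vs.span_base) blast

lemma O_circ: "r < T \<Longrightarrow> u \<in> gr V w \<Longrightarrow> u \<in> eigS V UNIV h r \<Longrightarrow> circ V T n r w u v \<in> Ogn V UNIV h n"
  unfolding Ogn_def T_def by (rule vs.span_base) blast

lemma Lm1_gr: "x \<in> gr V w \<Longrightarrow> Lop V (-1) x \<in> gr V (w + 1)"
  using ax_grmd[rule_format, OF ax_cv, of x w 0] unfolding Lop_def by (simp add: add.commute)

lemma Lm1p_gr: "x \<in> gr V w \<Longrightarrow> (Lop V (-1) ^^ k) x \<in> gr V (w + real k)"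
proof (induct k)
  case 0 thus ?case by simp
next
  case (Suc k) thus ?case using Lm1_gr[OF Suc(1)[OF Suc(2)]] by (simp add: add_ac)
qed

lemma L_congr:
  assumes u: "u \<in> gr V w"
  shows "(Lop V (-1) ^^ k) u - scal V (\<Prod>i = 0..<k. (- of_real w) - of_nat i) u \<in> Ogn V UNIV h n"
proof (induct k)
  case 0 thus ?case unfolding Ogn_def by (simp add: vs.span_zero)
next
  case (Suc k)
  let ?y = "(Lop V (-1) ^^ k) u"
  let ?ck = "\<Prod>i = 0..<k. (- of_real w) - (of_nat i :: complex)"
  let ?a = "of_real (w + real k) :: complex"
  have yg: "?y \<in> gr V (w + real k)" using Lm1p_gr[OF u] .
  have L0: "Lop V 0 ?y = scal V ?a ?y" using L0_gr[OF yg] .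
  have c1: "(\<Prod>i = 0..<Suc k. (- of_real w) - (of_nat i :: complex)) = - (?a * ?ck)"
    by (simp add: prod.atLeast0_lessThan_Suc algebra_simps)
  have "(Lop V (-1) ^^ Suc k) u - scal V (\<Prod>i = 0..<Suc k. (- of_real w) - of_nat i) u
        = (Lop V (-1) ?y + Lop V 0 ?y) - scal V ?a (?y - scal V ?ck u)"
    unfolding c1 L0 by (simp add: vs.scale_right_diff_distrib)
  also have "\<dots> \<in> Ogn V UNIV h n"
    unfolding Ogn_def by (rule vs.span_diff[OF O_L[unfolded Ogn_def] vs.span_scale[OF Suc[unfolded Ogn_def]]])
  finally show ?case .
qed

lemma mode_Lp: "md V ((Lop V (-1) ^^ k) x) m v = scal V (\<Prod>t = 0..<k. - (of_int m - of_nat t)) (md V x (m - int k) v)"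
proof (induct k arbitrary: x)
  case 0 thus ?case by simp
next
  case (Suc k)
  have "md V ((Lop V (-1) ^^ Suc k) x) m v = md V ((Lop V (-1) ^^ k) (Lop V (-1) x)) m v"
    by (simp only: funpow_Suc_right comp_apply)
  also have "\<dots> = scal V (\<Prod>t = 0..<k. - (of_int m - of_nat t)) (md V (Lop V (-1) x) (m - int k) v)"
    by (rule Suc)
  also have "md V (Lop V (-1) x) (m - int k) v = scal V (- of_int (m - int k)) (md V x (m - int k - 1) v)"
    using ax_Lm1 by blast
  finally show ?case by (simp add: prod.atLeast0_lessThan_Suc algebra_simps)
qed

lemma prod_fact: "(\<Prod>t = 0..<k. - (of_int (-1) - of_nat t) :: complex) = fact k"
  by (induct k) (simp_all add: prod.atLeast0_lessThan_Suc fact_Suc algebra_simps)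

lemma mode_vac: "md V u (-1 - int k) (vac V) = scal V (1 / fact k) ((Lop V (-1) ^^ k) u)"
proof -
  have "(Lop V (-1) ^^ k) u = md V ((Lop V (-1) ^^ k) u) (-1) (vac V)" using ax_vacm1 by simp
  also have "\<dots> = scal V (fact k) (md V u (-1 - int k) (vac V))" unfolding mode_Lp prod_fact ..
  finally show ?thesis by simp
qed

lemma fsum_eq: "finite A \<Longrightarrow> (\<And>i. i \<notin> A \<Longrightarrow> f i = 0) \<Longrightarrow> fsum f = sum f A"
  unfolding fsum_def by (rule sum.mono_neutral_left) auto

lemma res_vac:
  assumes u: "u \<in> gr V w" and b: "b \<ge> 1"
  shows "res V u (vac V) \<alpha> b - scal V ((\<alpha> + - of_real w) gchoose (b - 1)) u \<in> Ogn V UNIV h n"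
proof -
  define f where "f j = scal V (\<alpha> gchoose j) (md V u (int j - int b) (vac V))" for j
  have "res V u (vac V) \<alpha> b = fsum f" unfolding res_def f_def ..
  also have "\<dots> = sum f {..<b}"
    by (rule fsum_eq) (auto simp: f_def ax_modevac)
  finally have r: "res V u (vac V) \<alpha> b = sum f {..<b}" .
  have vd: "(\<alpha> + - of_real w) gchoose (b - 1) = (\<Sum>j<b. (\<alpha> gchoose j) * ((- of_real w) gchoose (b - 1 - j)))"
  proof -
    have "{..<b} = {0..b - 1}" using b by auto
    thus ?thesis using gbinomial_Vandermonde[of \<alpha> "- of_real w" "b - 1"] by simp
  qed
  have "res V u (vac V) \<alpha> b - scal V ((\<alpha> + - of_real w) gchoose (b - 1)) u
     = (\<Sum>j<b. scal V (\<alpha> gchoose j) (scal V (1 / fact (b - 1 - j))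
          ((Lop V (-1) ^^ (b - 1 - j)) u - scal V (\<Prod>i = 0..<(b - 1 - j). (- of_real w) - of_nat i) u)))"
    unfolding r vd vs.scale_sum_left sum_subtractf[symmetric]
  proof (intro sum.cong refl)
    fix j assume j: "j \<in> {..<b}"
    have e: "int j - int b = -1 - int (b - 1 - j)" using j by auto
    have g: "(\<Prod>i = 0..<(b - 1 - j). (- of_real w) - of_nat i) = fact (b - 1 - j) * ((- of_real w :: complex) gchoose (b - 1 - j))"
      by (rule gbinomial_mult_fact[symmetric])
    show "f j - scal V ((\<alpha> gchoose j) * ((- of_real w) gchoose (b - 1 - j))) u =
      scal V (\<alpha> gchoose j) (scal V (1 / fact (b - 1 - j))
          ((Lop V (-1) ^^ (b - 1 - j)) u - scal V (\<Prod>i = 0..<(b - 1 - j). (- of_real w) - of_nat i) u))"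
      unfolding f_def e mode_vac g by (simp add: vs.scale_right_diff_distrib)
  qed
  also have "\<dots> \<in> Ogn V UNIV h n"
    unfolding Ogn_def by (intro vs.span_sum vs.span_scale L_congr[OF u, unfolded Ogn_def])
  finally show ?thesis .
qed

end


lemma lev_real[simp]: "lev (real k) = k" unfolding lev_def by simp

context gctx begin

lemma ordT: "ordS UNIV h = T" unfolding T_def ..

lemma eigS_iff: "x \<in> eigS V UNIV h r \<longleftrightarrow> h x = scal V (inverse (zeta ^ r)) x"
  unfolding eigS_def ordT eig_val by simp

lemma fix_iff: "x \<in> fixpts h \<longleftrightarrow> h x = x"
proof
  assume "x \<in> fixpts h" hence "(h ^^ 1) x = x" unfolding fixpts_def by blast
  thus "h x = x" by simp
next
  assume a: "h x = x"
  have "(h ^^ k) x = x" for k by (induct k) (simp_all add: a)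
  thus "x \<in> fixpts h" unfolding fixpts_def by blast
qed

lemma part1: "fixpts h = eigS V UNIV h 0"
  using eigS_iff fix_iff by auto

lemma ord1: "ordS S (sigma V \<circ> sigma V) = 1"
  unfolding ordS_def
  by (rule Least_equality) (auto simp: sigma_sigma)

lemma sum_const_scal: "(\<Sum>k<N. x) = scal V (of_nat N) x"
  by (induct N) (simp_all add: vs.scale_left_distrib add.commute)

context
  fixes n :: real
  assumes hn: "\<exists>k::nat. n = real k / real T"
begin

lemma n_nonneg: "n \<ge> 0" using hn by auto

lemma lev_n: "real (lev n) = of_int \<lfloor>n\<rfloor>" unfolding lev_def using n_nonneg by simp

lemma frc_lt: "frc T n < T"
proof -
  have "n - real (lev n) < 1" unfolding lev_n by linarith
  moreover have "0 \<le> n - real (lev n)" unfolding lev_n by linarith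
  ultimately have "(n - real (lev n)) * real T < real T" using T_pos by simp
  hence "\<lfloor>(n - real (lev n)) * real T\<rfloor> < int T" by (simp add: floor_less_iff)
  thus ?thesis unfolding frc_def using T_pos by simp
qed

lemma key:
  assumes u: "u \<in> gr V w" and e: "u \<in> eigS V UNIV h r" and r: "0 < r" "r < T"
  shows "u \<in> Ogn V UNIV h n"
proof -
  define l where "l = lev n"
  define i where "i = frc T n"
  define \<beta> where "\<beta> = -1 + real (dlt i r) + real l + real r / real T"
  define \<alpha> where "\<alpha> = (of_real (w - 1 + real (dlt i r) + real l + real r / real T) :: complex)"
  define bb where "bb = 2 * l + dlt i r + dlt i (T - r) + 1"
  have c: "circ V T n r w u (vac V) = res V u (vac V) \<alpha> bb"
    unfolding circ_def Let_def \<alpha>_def bb_def l_def i_def ..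
  have c1: "res V u (vac V) \<alpha> bb \<in> Ogn V UNIV h n"
    by (metis c O_circ[OF r(2) u e])
  have c2: "res V u (vac V) \<alpha> bb - scal V ((\<alpha> + - of_real w) gchoose (bb - 1)) u \<in> Ogn V UNIV h n"
    by (rule res_vac[OF u]) (simp add: bb_def)
  have c3: "scal V ((\<alpha> + - of_real w) gchoose (bb - 1)) u \<in> Ogn V UNIV h n"
    using vs.span_diff[OF c1[unfolded Ogn_def] c2[unfolded Ogn_def]] unfolding Ogn_def by simp
  have ab: "\<alpha> + - of_real w = of_real \<beta>" unfolding \<alpha>_def \<beta>_def by simp
  have nz: "(of_real \<beta> :: complex) gchoose (bb - 1) \<noteq> 0"
  proof
    assume z: "(of_real \<beta> :: complex) gchoose (bb - 1) = 0"
    have "(\<Prod>j = 0..<(bb - 1). (of_real \<beta> :: complex) - of_nat j) = 0"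
      using gbinomial_mult_fact[of "bb - 1" "of_real \<beta> :: complex"] z by simp
    then obtain j where "(of_real \<beta> :: complex) = of_nat j" by auto
    hence "\<beta> = real j" by (metis of_real_eq_iff of_real_of_nat_eq)
    hence "real r / real T = of_int (int j + 1 - int (dlt i r) - int l)" unfolding \<beta>_def by simp
    moreover have "0 < real r / real T" "real r / real T < 1" using r by auto
    ultimately show False by (metis of_int_0_less_iff of_int_less_1_iff zero_less_iff_neq_zero int_one_le_iff_zero_less not_le) 
  qed
  have "u = scal V (1 / ((\<alpha> + - of_real w) gchoose (bb - 1))) (scal V ((\<alpha> + - of_real w) gchoose (bb - 1)) u)"
    using nz unfolding ab by simp
  also have "\<dots> \<in> Ogn V UNIV h n" using vs.span_scale[OF c3[unfolded Ogn_def]] unfolding Ogn_def .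
  finally show ?thesis .
qed

lemma part4: "\<exists>u\<in>fixpts h. v - u \<in> Ogn V UNIV h n"
proof -
  let ?F = "supp V v"
  define u where "u = (\<Sum>w\<in>?F. P 0 (comp V w v))"
  have "h u = u" unfolding u_def h_sum P_eig by simp
  hence uf: "u \<in> fixpts h" using fix_iff by blast
  obtain T' where T': "T = Suc T'" using T_pos by (cases T) auto
  have "v - u = (\<Sum>w\<in>?F. comp V w v - P 0 (comp V w v))"
    unfolding u_def sum_subtractf using comp_sum[of v] by simp
  also have "\<dots> = (\<Sum>w\<in>?F. \<Sum>r<T'. P (Suc r) (comp V w v))"
  proof (intro sum.cong refl)
    fix w
    have "comp V w v = (\<Sum>r<Suc T'. P r (comp V w v))" using P_sum[of "comp V w v"] T' by simp
    also have "\<dots> = P 0 (comp V w v) + (\<Sum>r<T'. P (Suc r) (comp V w v))" by (rule sum.lessThan_Suc_shift)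
    finally show "comp V w v - P 0 (comp V w v) = (\<Sum>r<T'. P (Suc r) (comp V w v))"
      by (metis add_diff_cancel_left')
  qed
  also have "\<dots> \<in> Ogn V UNIV h n"
  proof -
    have m: "P (Suc r) (comp V w v) \<in> Ogn V UNIV h n" if "r < T'" for w r
    proof -
      have "Suc r < T" using T' that by simp
      moreover have "P (Suc r) (comp V w v) \<in> eigS V UNIV h (Suc r)" using eigS_iff P_eig by blast
      ultimately show ?thesis using key[OF P_gr[OF comp_gr]] by blast
    qed
    show ?thesis unfolding Ogn_def by (intro vs.span_sum m[unfolded Ogn_def]) auto
  qed
  finally show ?thesis using uf by blast
qed

lemma circ_eq: "circ V 1 (real (lev n)) 0 w u v = circ V T n 0 w u v"
  using frc_lt unfolding circ_def Let_def frc_def dlt_def by simp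

lemma part2: "Ogn V (fixpts h) (sigma V \<circ> sigma V) (real (lev n)) \<subseteq> Ogn V UNIV h n"
  unfolding Ogn_def ord1
proof (rule vs.span_mono)
  show "{circ V 1 (real (lev n)) r w u v |r w u v.
           r < 1 \<and> u \<in> gr V w \<and> u \<in> eigS V (fixpts h) (sigma V \<circ> sigma V) r \<and> v \<in> fixpts h} \<union>
        {Lop V (- 1) u + Lop V 0 u |u. u \<in> fixpts h}
    \<subseteq> {circ V (ordS UNIV h) n r w u v |r w u v.
           r < ordS UNIV h \<and> u \<in> gr V w \<and> u \<in> eigS V UNIV h r \<and> v \<in> UNIV} \<union>
        {Lop V (- 1) u + Lop V 0 u |u. u \<in> UNIV}"
  proof
    fix x assume "x \<in> {circ V 1 (real (lev n)) r w u v |r w u v.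
           r < 1 \<and> u \<in> gr V w \<and> u \<in> eigS V (fixpts h) (sigma V \<circ> sigma V) r \<and> v \<in> fixpts h} \<union>
        {Lop V (- 1) u + Lop V 0 u |u. u \<in> fixpts h}"
    thus "x \<in> {circ V (ordS UNIV h) n r w u v |r w u v.
           r < ordS UNIV h \<and> u \<in> gr V w \<and> u \<in> eigS V UNIV h r \<and> v \<in> UNIV} \<union>
        {Lop V (- 1) u + Lop V 0 u |u. u \<in> UNIV}"
    proof
      assume "x \<in> {circ V 1 (real (lev n)) r w u v |r w u v.
           r < 1 \<and> u \<in> gr V w \<and> u \<in> eigS V (fixpts h) (sigma V \<circ> sigma V) r \<and> v \<in> fixpts h}"
      then obtain w u v where x: "x = circ V 1 (real (lev n)) 0 w u v" and uw: "u \<in> gr V w"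
        and ue: "u \<in> eigS V (fixpts h) (sigma V \<circ> sigma V) 0" by auto
      have "u \<in> fixpts h" using ue unfolding eigS_def by simp
      hence "u \<in> eigS V UNIV h 0" using part1 by simp
      thus ?thesis unfolding x circ_eq ordT using uw T_pos by blast
    qed auto
  qed
qed

lemma part3: "\<forall>u\<in>fixpts h. \<forall>v\<in>fixpts h.
         star V (fixpts h) (sigma V \<circ> sigma V) (real (lev n)) u v = star V UNIV h n u v"
proof (intro ballI)
  fix u v assume u: "u \<in> fixpts h"
  show "star V (fixpts h) (sigma V \<circ> sigma V) (real (lev n)) u v = star V UNIV h n u v"
    unfolding star_def
  proof (intro sum.cong refl)
    fix w
    have hc: "h (comp V w u) = comp V w u" using u fix_iff h_comp by metis
    hence hk: "(h ^^ k) (comp V w u) = comp V w u" for k by (induct k) simp_all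
    have p1: "proj0 V (fixpts h) (sigma V \<circ> sigma V) (comp V w u) = comp V w u"
      unfolding proj0_def ord1 by simp
    have p2: "proj0 V UNIV h (comp V w u) = comp V w u"
      unfolding proj0_def ordT hk sum_const_scal using T_pos by simp
    show "star_hom V (real (lev n)) w (proj0 V (fixpts h) (sigma V \<circ> sigma V) (comp V w u)) v =
          star_hom V n w (proj0 V UNIV h (comp V w u)) v"
      unfolding p1 p2 star_hom_def by simp
  qed
qed

end

end

theorem lemma3p2:
  fixes V :: "('v::ab_group_add) vosa" and g :: "'v \<Rightarrow> 'v" and n :: real
  assumes "is_vosa V"
    and "is_aut V g"
    and "\<exists>k>0. g ^^ k = id"
    and "\<exists>k::nat. n = real k / real (ordS UNIV (sigma V \<circ> g))"
  shows "fixpts (sigma V \<circ> g) = eigS V UNIV (sigma V \<circ> g) 0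
    \<and> Ogn V (fixpts (sigma V \<circ> g)) (sigma V \<circ> sigma V) (real (lev n))
        \<subseteq> Ogn V UNIV (sigma V \<circ> g) n
    \<and> (\<forall>u\<in>fixpts (sigma V \<circ> g). \<forall>v\<in>fixpts (sigma V \<circ> g).
         star V (fixpts (sigma V \<circ> g)) (sigma V \<circ> sigma V) (real (lev n)) u v
         = star V UNIV (sigma V \<circ> g) n u v)
    \<and> (\<forall>v. \<exists>u\<in>fixpts (sigma V \<circ> g). v - u \<in> Ogn V UNIV (sigma V \<circ> g) n)"
proof -
  interpret gctx V g by unfold_locales (use assms in auto)
  have hn: "\<exists>k::nat. n = real k / real T" using assms(4) unfolding T_def h_def .
  show ?thesis using part1 part2[OF hn] part3[OF hn] part4[OF hn] unfolding h_def by blast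
qed


end
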